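(* In the finite-horizon reinsurance model of the context, define non-negative coefficients recursively by $a_{N-1}=1$, $a_n=1+\beta a_{n+1}$; $\underline c_{N-1}=\operatorname{ess\,sup}(Z_N)$, $\underline c_n=(1+\beta a_{n+1})\operatorname{ess\,sup}(Z_{n+1})+\beta\underline c_{n+1}$; $\bar c_{N-1}=\rho_{N-1}(Y_N)+\pi_{R,N-1}(Y_N)$, $\bar c_n=\rho_n\big((1+\beta a_{n+1})Y_{n+1}\big)+(1+\beta a_{n+1})\pi_{R,n}(Y_{n+1})+\beta\bar c_{n+1}$, for $n=N-2,\dots,0$, and the decreasing functions $\underline b_n(x)=-\underline c_n-a_nx^+$, $\bar b_n(x)=\bar c_n+a_nx^-$. Then for every policy $\pi\in\Pi$, every $n=0,\dots,N-1$ and every history $h_n=(x_0,f_0,\dots,x_n)\in\mathcal H_n$, $$\underline b_n(x_n)\le V_{n\pi}(h_n)\le \bar b_n(x_n).$$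
   Context: Probability space $(\Omega,\mathcal A,\mathbb P)$, $p\in[1,\infty)$, $L^p$ real random variables with finite $p$-th moment, $L^p_+$ the nonnegative ones; positive values are losses. For a map $\rho:L^p\to\bar{\mathbb R}$ (risk measure) or $\pi:L^p_+\to\bar{\mathbb R}$ (premium principle): law-invariant means equal values for equally distributed arguments; monotone means $X\le X'$ a.s. implies $\rho(X)\le\rho(X')$; translation invariant means $\rho(X+c)=\rho(X)+c$ for $c\in\mathbb R$; normalized means $\rho(0)=0$; monetary means monotone and translation invariant; Fatou property means: $X_k\to X$ a.s., $X_k,X\in L^p$, $|X_k|\le W$ a.s. for some $W\in L^p$ imply $\liminf_k\rho(X_k)\ge\rho(X)$. $\mathcal F=\{f:\mathbb R_+\to\mathbb R_+ : f(t)\le t\ \forall t,\ f\text{ increasing},\ \mathrm{id}_{\mathbb R_+}-f\text{ increasing}\}$ with the metric of compact convergence. Finite-horizon model: horizon $N\in\mathbb N$, discount factor $\beta\in(0,1]$; $(Y_n,Z_n)_{n\ge1}$ an independent sequence of random vectors with $Y_n\in L^p_+$ (claims) and $Z_n\in L^\infty_+$ (premium income). For $n=0,\dots,N-1$: $\pi_{R,n}:L^p_+\to\bar{\mathbb R}$ is a law-invariant, monotone, normalized premium principle with the Fatou property and $\pi_{R,n}(Y_{n+1})<\infty$, and $\pi_{R,n}(f):=\pi_{R,n}(Y_{n+1}-f(Y_{n+1}))$ for $f\in\mathcal F$; $\rho_n:L^p\to\bar{\mathbb R}$ is a law-invariant, normalized monetary risk measure with the Fatou property such that $\rho_n(\lambda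 Y_{n+1})<\infty$ for all $\lambda\ge0$. Admissible actions $D_n(x)$ are either $\mathcal F$ for all $x$ (unconstrained) or $\{f\in\mathcal F:\pi_{R,n}(f)\le x^+\}$ (budget-constrained). Histories: $\mathcal H_0=\mathbb R$, $\mathcal H_n$ is the set of $h_n=(x_0,f_0,x_1,\dots,f_{n-1},x_n)$ with $x_k\in\mathbb R$, $f_k\in D_k(x_k)$. A policy $\pi=(d_0,\dots,d_{N-1})\in\Pi$ consists of measurable $d_n:\mathcal H_n\to\mathcal F$ with $d_n(h_n)\in D_n(x_n)$. Policy values: $V_{N\pi}\equiv0$ and $$V_{n\pi}(h_n)=\rho_n\Big(d_n(h_n)(Y_{n+1})+\pi_{R,n}(d_n(h_n))-Z_{n+1}-x_n+\beta V_{n+1,\pi}\big(h_n,d_n(h_n),x_n+Z_{n+1}-d_n(h_n)(Y_{n+1})-\pi_{R,n}(d_n(h_n))\big)\Big).$$ Standing assumption: the risk measures are such that all policy values are measurable functions of the history (so that the arguments of $\rho_n$ are random variables). $\operatorname{ess\,sup}$ denotes the essential supremum. *)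

theory Defs
  imports "HOL-Probability.Probability"
begin

definition Lp :: "'a measure \<Rightarrow> real \<Rightarrow> ('a \<Rightarrow> real) set" where
  "Lp M p = {X. X \<in> borel_measurable M \<and> integrable M (\<lambda>\<omega>. \<bar>X \<omega>\<bar> powr p)}"

definition Lp_plus :: "'a measure \<Rightarrow> real \<Rightarrow> ('a \<Rightarrow> real) set" where
  "Lp_plus M p = {X \<in> Lp M p. AE \<omega> in M. 0 \<le> X \<omega>}"

definition Linf_plus :: "'a measure \<Rightarrow> ('a \<Rightarrow> real) set" where
  "Linf_plus M = {X. X \<in> borel_measurable M \<and> (AE \<omega> in M. 0 \<le> X \<omega>)
                     \<and> esssup M (\<lambda>\<omega>. ereal (X \<omega>)) < \<infinity>}"

definition law_invariant :: "'a measure \<Rightarrow> ('a \<Rightarrow> real) set \<Rightarrow> (('a \<Rightarrow> real) \<Rightarrow> ereal) \<Rightarrow> bool" where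
  "law_invariant M S \<rho> \<longleftrightarrow>
     (\<forall>X\<in>S. \<forall>X'\<in>S. distr M borel X = distr M borel X' \<longrightarrow> \<rho> X = \<rho> X')"

definition monotone_rm :: "'a measure \<Rightarrow> ('a \<Rightarrow> real) set \<Rightarrow> (('a \<Rightarrow> real) \<Rightarrow> ereal) \<Rightarrow> bool" where
  "monotone_rm M S \<rho> \<longleftrightarrow>
     (\<forall>X\<in>S. \<forall>X'\<in>S. (AE \<omega> in M. X \<omega> \<le> X' \<omega>) \<longrightarrow> \<rho> X \<le> \<rho> X')"

definition translation_invariant :: "('a \<Rightarrow> real) set \<Rightarrow> (('a \<Rightarrow> real) \<Rightarrow> ereal) \<Rightarrow> bool" where
  "translation_invariant S \<rho> \<longleftrightarrow>
     (\<forall>X\<in>S. \<forall>c::real. \<rho> (\<lambda>\<omega>. X \<omega> + c) = \<rho> X + ereal c)"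

definition normalized :: "(('a \<Rightarrow> real) \<Rightarrow> ereal) \<Rightarrow> bool" where
  "normalized \<rho> \<longleftrightarrow> \<rho> (\<lambda>_. 0) = 0"

definition fatou_property :: "'a measure \<Rightarrow> real \<Rightarrow> ('a \<Rightarrow> real) set \<Rightarrow> (('a \<Rightarrow> real) \<Rightarrow> ereal) \<Rightarrow> bool" where
  "fatou_property M p S \<rho> \<longleftrightarrow>
     (\<forall>Xs X W. (\<forall>k. Xs k \<in> S) \<longrightarrow> X \<in> S \<longrightarrow> W \<in> Lp M p \<longrightarrow>
        (AE \<omega> in M. (\<lambda>k. Xs k \<omega>) \<longlonglongrightarrow> X \<omega>) \<longrightarrow>
        (\<forall>k. AE \<omega> in M. \<bar>Xs k \<omega>\<bar> \<le> W \<omega>) \<longrightarrow>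
        \<rho> X \<le> liminf (\<lambda>k. \<rho> (Xs k)))"

definition risk_measure :: "'a measure \<Rightarrow> real \<Rightarrow> (('a \<Rightarrow> real) \<Rightarrow> ereal) \<Rightarrow> bool" where
  "risk_measure M p \<rho> \<longleftrightarrow>
     law_invariant M (Lp M p) \<rho> \<and> monotone_rm M (Lp M p) \<rho> \<and>
     translation_invariant (Lp M p) \<rho> \<and> normalized \<rho> \<and> fatou_property M p (Lp M p) \<rho>"

definition premium_principle :: "'a measure \<Rightarrow> real \<Rightarrow> (('a \<Rightarrow> real) \<Rightarrow> ereal) \<Rightarrow> bool" where
  "premium_principle M p \<pi> \<longleftrightarrow>
     law_invariant M (Lp_plus M p) \<pi> \<and> monotone_rm M (Lp_plus M p) \<pi> \<and>
     normalized \<pi> \<and> fatou_property M p (Lp_plus M p) \<pi>"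

text \<open>Functions R_+ \<rightarrow> R_+ are represented as real functions extended by 0 on the negative axis.\<close>
definition Fset :: "(real \<Rightarrow> real) set" where
  "Fset = {f. (\<forall>t<0. f t = 0) \<and> (\<forall>t\<ge>0. 0 \<le> f t \<and> f t \<le> t)
              \<and> mono_on {0..} f \<and> mono_on {0..} (\<lambda>t. t - f t)}"

definition piRf :: "(nat \<Rightarrow> ('a \<Rightarrow> real) \<Rightarrow> ereal) \<Rightarrow> (nat \<Rightarrow> 'a \<Rightarrow> real) \<Rightarrow> nat \<Rightarrow> (real \<Rightarrow> real) \<Rightarrow> ereal" where
  "piRf piR Y n f = piR n (\<lambda>\<omega>. Y (Suc n) \<omega> - f (Y (Suc n) \<omega>))"

definition Dset :: "bool \<Rightarrow> (nat \<Rightarrow> ('a \<Rightarrow> real) \<Rightarrow> ereal) \<Rightarrow> (nat \<Rightarrow> 'a \<Rightarrow> real) \<Rightarrow> nat \<Rightarrow> real \<Rightarrow> (real \<Rightarrow> real) set" where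
  "Dset constrained piR Y n x =
     (if constrained then {f \<in> Fset. piRf piR Y n f \<le> ereal (max x 0)} else Fset)"

text \<open>A history (x_0, f_0, x_1, ..., f_{n-1}, x_n) is represented as (x_0, [(f_0,x_1), ..., (f_{n-1},x_n)]).\<close>
type_synonym hist = "real \<times> ((real \<Rightarrow> real) \<times> real) list"

definition hx :: "hist \<Rightarrow> nat \<Rightarrow> real" where
  "hx h k = (if k = 0 then fst h else snd (snd h ! (k - 1)))"

definition hf :: "hist \<Rightarrow> nat \<Rightarrow> (real \<Rightarrow> real)" where
  "hf h k = fst (snd h ! k)"

definition hcur :: "hist \<Rightarrow> real" where
  "hcur h = hx h (length (snd h))"

definition happend :: "hist \<Rightarrow> (real \<Rightarrow> real) \<Rightarrow> real \<Rightarrow> hist" where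
  "happend h f x = (fst h, snd h @ [(f, x)])"

definition Hset :: "bool \<Rightarrow> (nat \<Rightarrow> ('a \<Rightarrow> real) \<Rightarrow> ereal) \<Rightarrow> (nat \<Rightarrow> 'a \<Rightarrow> real) \<Rightarrow> nat \<Rightarrow> hist set" where
  "Hset constrained piR Y n =
     {h. length (snd h) = n \<and> (\<forall>k<n. hf h k \<in> Dset constrained piR Y k (hx h k))}"

text \<open>Measurable structure on H_n: generated by the coordinates x_k and the
  evaluations f_k(t), t \<ge> 0 (this is the Borel sigma-algebra of the product of
  R and F with the metric of compact convergence).\<close>
definition Hmeas :: "bool \<Rightarrow> (nat \<Rightarrow> ('a \<Rightarrow> real) \<Rightarrow> ereal) \<Rightarrow> (nat \<Rightarrow> 'a \<Rightarrow> real) \<Rightarrow> nat \<Rightarrow> hist measure" where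
  "Hmeas constrained piR Y n = sigma (Hset constrained piR Y n)
     ({{h \<in> Hset constrained piR Y n. hx h k \<in> B} | k B. k \<le> n \<and> B \<in> sets borel}
      \<union> {{h \<in> Hset constrained piR Y n. hf h k t \<in> B} | k t B. k < n \<and> 0 \<le> t \<and> B \<in> sets borel})"

definition is_policy :: "nat \<Rightarrow> bool \<Rightarrow> (nat \<Rightarrow> ('a \<Rightarrow> real) \<Rightarrow> ereal) \<Rightarrow> (nat \<Rightarrow> 'a \<Rightarrow> real)
    \<Rightarrow> (nat \<Rightarrow> hist \<Rightarrow> real \<Rightarrow> real) \<Rightarrow> bool" where
  "is_policy N constrained piR Y d \<longleftrightarrow>
     (\<forall>n<N. \<forall>h\<in>Hset constrained piR Y n. d n h \<in> Dset constrained piR Y n (hcur h)) \<and>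
     (\<forall>n<N. \<forall>t\<ge>0. (\<lambda>h. d n h t) \<in> measurable (Hmeas constrained piR Y n) borel)"

text \<open>The argument of rho_n in the recursion, given the value function W = V_{n+1,pi}.
  V_{n+1} is real-valued by the theorem; real_of_ereal is used to embed it into a real random variable.\<close>
definition pol_arg :: "real \<Rightarrow> (nat \<Rightarrow> ('a \<Rightarrow> real) \<Rightarrow> ereal) \<Rightarrow> (nat \<Rightarrow> 'a \<Rightarrow> real) \<Rightarrow> (nat \<Rightarrow> 'a \<Rightarrow> real)
    \<Rightarrow> (nat \<Rightarrow> hist \<Rightarrow> real \<Rightarrow> real) \<Rightarrow> nat \<Rightarrow> (hist \<Rightarrow> ereal) \<Rightarrow> hist \<Rightarrow> 'a \<Rightarrow> real" where
  "pol_arg \<beta> piR Y Z d n W h = (\<lambda>\<omega>.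
     let f = d n h; pr = real_of_ereal (piRf piR Y n f); x = hcur h;
         x' = x + Z (Suc n) \<omega> - f (Y (Suc n) \<omega>) - pr
     in f (Y (Suc n) \<omega>) + pr - Z (Suc n) \<omega> - x + \<beta> * real_of_ereal (W (happend h f x')))"

text \<open>Vk k n h = V_{n,pi}(h) when k = N - n steps remain.\<close>
primrec Vk :: "real \<Rightarrow> (nat \<Rightarrow> ('a \<Rightarrow> real) \<Rightarrow> ereal) \<Rightarrow> (nat \<Rightarrow> ('a \<Rightarrow> real) \<Rightarrow> ereal)
    \<Rightarrow> (nat \<Rightarrow> 'a \<Rightarrow> real) \<Rightarrow> (nat \<Rightarrow> 'a \<Rightarrow> real) \<Rightarrow> (nat \<Rightarrow> hist \<Rightarrow> real \<Rightarrow> real)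
    \<Rightarrow> nat \<Rightarrow> nat \<Rightarrow> hist \<Rightarrow> ereal" where
  "Vk \<beta> rho piR Y Z d 0 n h = 0"
| "Vk \<beta> rho piR Y Z d (Suc k) n h =
     rho n (pol_arg \<beta> piR Y Z d n (Vk \<beta> rho piR Y Z d k (Suc n)) h)"

definition Vpol :: "nat \<Rightarrow> real \<Rightarrow> (nat \<Rightarrow> ('a \<Rightarrow> real) \<Rightarrow> ereal) \<Rightarrow> (nat \<Rightarrow> ('a \<Rightarrow> real) \<Rightarrow> ereal)
    \<Rightarrow> (nat \<Rightarrow> 'a \<Rightarrow> real) \<Rightarrow> (nat \<Rightarrow> 'a \<Rightarrow> real) \<Rightarrow> (nat \<Rightarrow> hist \<Rightarrow> real \<Rightarrow> real)
    \<Rightarrow> nat \<Rightarrow> hist \<Rightarrow> ereal" where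
  "Vpol N \<beta> rho piR Y Z d n h = Vk \<beta> rho piR Y Z d (N - n) n h"

text \<open>ak k = a_{N-1-k}: a_{N-1} = 1, a_n = 1 + beta a_{n+1}.\<close>
primrec ak :: "real \<Rightarrow> nat \<Rightarrow> real" where
  "ak \<beta> 0 = 1"
| "ak \<beta> (Suc k) = 1 + \<beta> * ak \<beta> k"

definition acoef :: "nat \<Rightarrow> real \<Rightarrow> nat \<Rightarrow> real" where
  "acoef N \<beta> n = ak \<beta> (N - 1 - n)"

text \<open>clk k n = lower c_n where k = N - 1 - n.\<close>
primrec clk :: "'a measure \<Rightarrow> real \<Rightarrow> (nat \<Rightarrow> 'a \<Rightarrow> real) \<Rightarrow> nat \<Rightarrow> nat \<Rightarrow> ereal" where
  "clk M \<beta> Z 0 n = esssup M (\<lambda>\<omega>. ereal (Z (Suc n) \<omega>))"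
| "clk M \<beta> Z (Suc k) n = ereal (1 + \<beta> * ak \<beta> k) * esssup M (\<lambda>\<omega>. ereal (Z (Suc n) \<omega>))
                          + ereal \<beta> * clk M \<beta> Z k (Suc n)"

definition c_low :: "'a measure \<Rightarrow> nat \<Rightarrow> real \<Rightarrow> (nat \<Rightarrow> 'a \<Rightarrow> real) \<Rightarrow> nat \<Rightarrow> ereal" where
  "c_low M N \<beta> Z n = clk M \<beta> Z (N - 1 - n) n"

text \<open>cuk k n = upper c_n where k = N - 1 - n.\<close>
primrec cuk :: "real \<Rightarrow> (nat \<Rightarrow> ('a \<Rightarrow> real) \<Rightarrow> ereal) \<Rightarrow> (nat \<Rightarrow> ('a \<Rightarrow> real) \<Rightarrow> ereal)
    \<Rightarrow> (nat \<Rightarrow> 'a \<Rightarrow> real) \<Rightarrow> nat \<Rightarrow> nat \<Rightarrow> ereal" where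
  "cuk \<beta> rho piR Y 0 n = rho n (Y (Suc n)) + piR n (Y (Suc n))"
| "cuk \<beta> rho piR Y (Suc k) n =
     rho n (\<lambda>\<omega>. (1 + \<beta> * ak \<beta> k) * Y (Suc n) \<omega>)
     + ereal (1 + \<beta> * ak \<beta> k) * piR n (Y (Suc n))
     + ereal \<beta> * cuk \<beta> rho piR Y k (Suc n)"

definition c_up :: "nat \<Rightarrow> real \<Rightarrow> (nat \<Rightarrow> ('a \<Rightarrow> real) \<Rightarrow> ereal) \<Rightarrow> (nat \<Rightarrow> ('a \<Rightarrow> real) \<Rightarrow> ereal)
    \<Rightarrow> (nat \<Rightarrow> 'a \<Rightarrow> real) \<Rightarrow> nat \<Rightarrow> ereal" where
  "c_up N \<beta> rho piR Y n = cuk \<beta> rho piR Y (N - 1 - n) n"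

definition b_low :: "'a measure \<Rightarrow> nat \<Rightarrow> real \<Rightarrow> (nat \<Rightarrow> 'a \<Rightarrow> real) \<Rightarrow> nat \<Rightarrow> real \<Rightarrow> ereal" where
  "b_low M N \<beta> Z n x = - c_low M N \<beta> Z n - ereal (acoef N \<beta> n * max x 0)"

definition b_up :: "nat \<Rightarrow> real \<Rightarrow> (nat \<Rightarrow> ('a \<Rightarrow> real) \<Rightarrow> ereal) \<Rightarrow> (nat \<Rightarrow> ('a \<Rightarrow> real) \<Rightarrow> ereal)
    \<Rightarrow> (nat \<Rightarrow> 'a \<Rightarrow> real) \<Rightarrow> nat \<Rightarrow> real \<Rightarrow> ereal" where
  "b_up N \<beta> rho piR Y n x = c_up N \<beta> rho piR Y n + ereal (acoef N \<beta> n * max (- x) 0)"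

end

theory Submission imports Defs begin

lemma Lp_dom:
  assumes X: "X \<in> borel_measurable M" and G: "G \<in> Lp M p" and p: "0 \<le> p"
    and ae: "AE \<omega> in M. \<bar>X \<omega>\<bar> \<le> \<bar>G \<omega>\<bar>"
  shows "X \<in> Lp M p"
proof -
  have iG: "integrable M (\<lambda>\<omega>. \<bar>G \<omega>\<bar> powr p)" using G by (simp add: Lp_def)
  have "integrable M (\<lambda>\<omega>. \<bar>X \<omega>\<bar> powr p)"
  proof (rule Bochner_Integration.integrable_bound[OF iG])
    show "(\<lambda>\<omega>. \<bar>X \<omega>\<bar> powr p) \<in> borel_measurable M" using X by measurable
    show "AE \<omega> in M. norm (\<bar>X \<omega>\<bar> powr p) \<le> norm (\<bar>G \<omega>\<bar> powr p)"
      using ae by eventually_elim (simp add: powr_mono2 p)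
  qed
  then show ?thesis using X by (simp add: Lp_def)
qed

lemma Lp_add:
  assumes X: "X \<in> Lp M p" and Y: "Y \<in> Lp M p" and p: "0 \<le> p"
  shows "(\<lambda>\<omega>. X \<omega> + Y \<omega>) \<in> Lp M p"
proof -
  have iX: "integrable M (\<lambda>\<omega>. \<bar>X \<omega>\<bar> powr p)" and mX: "X \<in> borel_measurable M"
    using X by (auto simp: Lp_def)
  have iY: "integrable M (\<lambda>\<omega>. \<bar>Y \<omega>\<bar> powr p)" and mY: "Y \<in> borel_measurable M"
    using Y by (auto simp: Lp_def)
  have pt: "\<bar>a + b\<bar> powr p \<le> 2 powr p * (\<bar>a\<bar> powr p + \<bar>b\<bar> powr p)" for a b :: real
  proof -
    have "\<bar>a + b\<bar> powr p \<le> (2 * max \<bar>a\<bar> \<bar>b\<bar>) powr p"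
      by (rule powr_mono2) (auto simp: p)
    also have "\<dots> = 2 powr p * (max \<bar>a\<bar> \<bar>b\<bar>) powr p"
      by (simp add: powr_mult)
    also have "(max \<bar>a\<bar> \<bar>b\<bar>) powr p \<le> \<bar>a\<bar> powr p + \<bar>b\<bar> powr p"
      by (cases "\<bar>a\<bar> \<le> \<bar>b\<bar>") (auto simp: max_def)
    finally show ?thesis by simp
  qed
  have "integrable M (\<lambda>\<omega>. \<bar>X \<omega> + Y \<omega>\<bar> powr p)"
  proof (rule Bochner_Integration.integrable_bound)
    show "integrable M (\<lambda>\<omega>. 2 powr p * (\<bar>X \<omega>\<bar> powr p + \<bar>Y \<omega>\<bar> powr p))"
      using iX iY by auto
    show "(\<lambda>\<omega>. \<bar>X \<omega> + Y \<omega>\<bar> powr p) \<in> borel_measurable M" using mX mY by measurable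
    show "AE \<omega> in M. norm (\<bar>X \<omega> + Y \<omega>\<bar> powr p) \<le> norm (2 powr p * (\<bar>X \<omega>\<bar> powr p + \<bar>Y \<omega>\<bar> powr p))"
      using pt by auto
  qed
  then show ?thesis using mX mY by (simp add: Lp_def)
qed

lemma Lp_cmult:
  assumes X: "X \<in> Lp M p"
  shows "(\<lambda>\<omega>. c * X \<omega>) \<in> Lp M p"
proof -
  have iX: "integrable M (\<lambda>\<omega>. \<bar>X \<omega>\<bar> powr p)" and mX: "X \<in> borel_measurable M"
    using X by (auto simp: Lp_def)
  have "(\<lambda>\<omega>. \<bar>c * X \<omega>\<bar> powr p) = (\<lambda>\<omega>. \<bar>c\<bar> powr p * \<bar>X \<omega>\<bar> powr p)"
    by (simp add: abs_mult powr_mult)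
  then show ?thesis using iX mX by (simp add: Lp_def)
qed

lemma Lp_const:
  assumes "finite_measure M"
  shows "(\<lambda>\<omega>. c) \<in> Lp M p"
  using assms by (simp add: Lp_def finite_measure.integrable_const)


lemma Fset_props:
  assumes f: "f \<in> Fset"
  shows "f \<in> borel_measurable borel" "\<And>t. 0 \<le> f t" "\<And>t. 0 \<le> t \<Longrightarrow> f t \<le> t"
proof -
  have neg: "\<And>t. t < 0 \<Longrightarrow> f t = 0" and pos: "\<And>t. 0 \<le> t \<Longrightarrow> 0 \<le> f t \<and> f t \<le> t"
    and mo: "mono_on {0..} f" using f by (auto simp: Fset_def)
  show nn: "\<And>t. 0 \<le> f t" using neg pos by (metis linorder_not_le order_refl)
  show "\<And>t. 0 \<le> t \<Longrightarrow> f t \<le> t" using pos by blast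
  have "mono f"
  proof (rule monoI)
    fix s t :: real assume "s \<le> t"
    show "f s \<le> f t"
    proof (cases "s < 0")
      case True then show ?thesis using neg nn by simp
    next
      case False then show ?thesis using \<open>s \<le> t\<close> mo by (auto simp: mono_on_def)
    qed
  qed
  then show "f \<in> borel_measurable borel" by (rule borel_measurable_mono)
qed

lemma step:
  fixes W :: "real \<Rightarrow> ereal"
  assumes M: "prob_space M" and p: "1 \<le> p" and \<beta>: "0 < \<beta>"
    and Yv: "Yv \<in> Lp_plus M p" and Zv: "Zv \<in> Linf_plus M"
    and R: "risk_measure M p R" and P: "premium_principle M p P" and Pfin: "P Yv < \<infinity>"
    and f: "f \<in> Fset"
    and a0: "0 \<le> a" and cl0: "0 \<le> cl" and cu0: "0 \<le> cu"
    and Wb: "\<And>y. ereal (-cl - a * max y 0) \<le> W y \<and> W y \<le> ereal (cu + a * max (-y) 0)"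
    and pr_def: "pr = real_of_ereal (P (\<lambda>\<omega>. Yv \<omega> - f (Yv \<omega>)))"
    and arg_def: "arg = (\<lambda>\<omega>. f (Yv \<omega>) + pr - Zv \<omega> - x + \<beta> * real_of_ereal (W (x + Zv \<omega> - f (Yv \<omega>) - pr)))"
    and meas: "arg \<in> borel_measurable M"
    and s_def: "s = real_of_ereal (esssup M (\<lambda>\<omega>. ereal (Zv \<omega>)))"
    and \<pi>_def: "\<pi> = real_of_ereal (P Yv)"
  shows "ereal (-(1+\<beta>*a)* s - \<beta>*cl - (1+\<beta>*a)*max x 0) \<le> R arg
       \<and> R arg \<le> R (\<lambda>\<omega>. (1+\<beta>*a) * Yv \<omega>) + ereal ((1+\<beta>*a)*\<pi> + \<beta>*cu + (1+\<beta>*a)*max (-x) 0)"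
proof -
  interpret prob_space M by (rule M)
  have p0: "0 \<le> p" using p by simp
  note fp = Fset_props[OF f]
  have mY: "Yv \<in> borel_measurable M" and YLp: "Yv \<in> Lp M p" and Ynn: "AE \<omega> in M. 0 \<le> Yv \<omega>"
    using Yv by (auto simp: Lp_plus_def Lp_def)
  have mZ: "Zv \<in> borel_measurable M" and Znn: "AE \<omega> in M. 0 \<le> Zv \<omega>"
    and Zsup: "esssup M (\<lambda>\<omega>. ereal (Zv \<omega>)) < \<infinity>"
    using Zv by (auto simp: Linf_plus_def)
  have "esssup M (\<lambda>\<omega>. ereal 0) \<le> esssup M (\<lambda>\<omega>. ereal (Zv \<omega>))"
    by (rule esssup_AE_mono) (use Znn in auto)
  then have "0 \<le> esssup M (\<lambda>\<omega>. ereal (Zv \<omega>))"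
    using esssup_const[of M "ereal 0"] emeasure_space_1 by (simp add: zero_ereal_def)
  with Zsup have sE: "esssup M (\<lambda>\<omega>. ereal (Zv \<omega>)) = ereal s" and s0: "0 \<le> s"
    unfolding s_def by (cases "esssup M (\<lambda>\<omega>. ereal (Zv \<omega>))"; auto)+
  have Zle: "AE \<omega> in M. Zv \<omega> \<le> s"
    using esssup_AE[of "\<lambda>\<omega>. ereal (Zv \<omega>)" M] unfolding sE by auto
  have const0: "(\<lambda>\<omega>. 0::real) \<in> Lp_plus M p"
    by (simp add: Lp_plus_def Lp_const finite_measure_axioms)
  have Yf: "(\<lambda>\<omega>. Yv \<omega> - f (Yv \<omega>)) \<in> Lp_plus M p"
  proof -
    have m: "(\<lambda>\<omega>. Yv \<omega> - f (Yv \<omega>)) \<in> borel_measurable M"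
      using mY fp(1) by measurable
    have "AE \<omega> in M. \<bar>Yv \<omega> - f (Yv \<omega>)\<bar> \<le> \<bar>Yv \<omega>\<bar>" using Ynn
      by eventually_elim (use fp in auto)
    then have "(\<lambda>\<omega>. Yv \<omega> - f (Yv \<omega>)) \<in> Lp M p" using Lp_dom[OF m YLp p0] by simp
    moreover have "AE \<omega> in M. 0 \<le> Yv \<omega> - f (Yv \<omega>)" using Ynn
      by eventually_elim (use fp in auto)
    ultimately show ?thesis by (simp add: Lp_plus_def)
  qed
  have Pmono: "monotone_rm M (Lp_plus M p) P" and Pn: "P (\<lambda>_. 0) = 0"
    using P by (auto simp: premium_principle_def normalized_def)
  have "P (\<lambda>_. 0) \<le> P (\<lambda>\<omega>. Yv \<omega> - f (Yv \<omega>))"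
  proof -
    have "AE \<omega> in M. 0 \<le> Yv \<omega> - f (Yv \<omega>)" using Yf by (simp add: Lp_plus_def)
    then show ?thesis by (rule Pmono[unfolded monotone_rm_def, rule_format, OF const0 Yf])
  qed
  then have P1: "0 \<le> P (\<lambda>\<omega>. Yv \<omega> - f (Yv \<omega>))" using Pn by simp
  have "P (\<lambda>\<omega>. Yv \<omega> - f (Yv \<omega>)) \<le> P Yv"
  proof -
    have "AE \<omega> in M. Yv \<omega> - f (Yv \<omega>) \<le> Yv \<omega>" using fp(2) by (simp add: diff_le_self)
    then show ?thesis by (rule Pmono[unfolded monotone_rm_def, rule_format, OF Yf Yv])
  qed
  with P1 Pfin have pr0: "0 \<le> pr" and prpi: "pr \<le> \<pi>" and pi0: "0 \<le> \<pi>"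
    unfolding pr_def \<pi>_def
    by (cases "P (\<lambda>\<omega>. Yv \<omega> - f (Yv \<omega>))"; cases "P Yv"; auto)+
  define A where "A = 1 + \<beta> * a"
  have A1: "1 \<le> A" using \<beta> a0 by (simp add: A_def)
  define L where "L = -A* s - \<beta>*cl - A*max x 0"
  define K where "K = A*\<pi> + \<beta>*cu + A*max (-x) 0"
  have bnds: "AE \<omega> in M. L \<le> arg \<omega> \<and> arg \<omega> \<le> A * Yv \<omega> + K"
    using Ynn Znn Zle
  proof eventually_elim
    case (elim \<omega>)
    define y where "y = Yv \<omega>"
    define z where "z = Zv \<omega>"
    define x' where "x' = x + z - f y - pr"
    define w where "w = real_of_ereal (W x')"
    have fy0: "0 \<le> f y" and fyy: "f y \<le> y" using fp elim by (auto simp: y_def)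
    have wl: "-cl - a * max x' 0 \<le> w" and wu: "w \<le> cu + a * max (-x') 0"
      using Wb[of x'] unfolding w_def by (cases "W x'"; auto)+
    have y0: "0 \<le> y" and z0: "0 \<le> z" and zs: "z \<le> s" using elim by (auto simp: y_def z_def)
    have argw: "arg \<omega> = f y + pr - z - x + \<beta> * w"
      by (simp add: arg_def y_def z_def x'_def w_def)
    have m1: "max x' 0 \<le> max x 0 + z" using fy0 pr0 z0 by (auto simp: x'_def)
    have m2: "max (-x') 0 \<le> y + \<pi> + max (-x) 0" using fyy pr0 prpi z0 fy0 by (auto simp: x'_def)
    have "a * max x' 0 \<le> a * (max x 0 + z)" using m1 a0 by (rule mult_left_mono)
    then have "\<beta> * (-cl - a * (max x 0 + z)) \<le> \<beta> * w" using wl \<beta>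
      by (intro mult_left_mono) auto
    then have F1: "-\<beta>*cl - \<beta>*a*max x 0 - \<beta>*a*z \<le> \<beta> * w" by (simp add: algebra_simps)
    have "a * max (-x') 0 \<le> a * (y + \<pi> + max (-x) 0)" using m2 a0 by (rule mult_left_mono)
    then have "\<beta> * w \<le> \<beta> * (cu + a * (y + \<pi> + max (-x) 0))" using wu \<beta>
      by (intro mult_left_mono) auto
    then have F2: "\<beta> * w \<le> \<beta>*cu + \<beta>*a*y + \<beta>*a*\<pi> + \<beta>*a*max (-x) 0" by (simp add: algebra_simps)
    have F3: "\<beta> * a * z \<le> \<beta> * a * s" using zs \<beta> a0 by (intro mult_left_mono) auto
    have F4: "0 \<le> \<beta> * a * max x 0" using \<beta> a0 by auto
    have F5: "0 \<le> \<beta> * a * max (-x) 0" using \<beta> a0 by auto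
    have F6: "x \<le> max x 0" "-x \<le> max (-x) 0" by auto
    have "L = -s - \<beta>*a* s - \<beta>*cl - max x 0 - \<beta>*a*max x 0"
      unfolding L_def A_def by (simp add: algebra_simps)
    moreover have "A * y + K = y + \<beta>*a*y + \<pi> + \<beta>*a*\<pi> + \<beta>*cu + max (-x) 0 + \<beta>*a*max (-x) 0"
      unfolding K_def A_def by (simp add: algebra_simps)
    ultimately show ?case unfolding argw y_def[symmetric]
      using F1 F2 F3 F4 F5 F6 fy0 fyy pr0 prpi zs z0 y0 by linarith
  qed
  have AY: "(\<lambda>\<omega>. A * Yv \<omega>) \<in> Lp M p" using Lp_cmult[OF YLp] .
  have U: "(\<lambda>\<omega>. A * Yv \<omega> + K) \<in> Lp M p"
    using Lp_add[OF AY Lp_const[OF finite_measure_axioms] p0] .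
  have G: "(\<lambda>\<omega>. A * Yv \<omega> + (K + \<bar>L\<bar>)) \<in> Lp M p"
    using Lp_add[OF AY Lp_const[OF finite_measure_axioms] p0] .
  have K0: "0 \<le> K" unfolding K_def using A1 pi0 \<beta> cu0 by auto
  have "AE \<omega> in M. \<bar>arg \<omega>\<bar> \<le> \<bar>A * Yv \<omega> + (K + \<bar>L\<bar>)\<bar>"
    using bnds Ynn
  proof eventually_elim
    case (elim \<omega>)
    have "0 \<le> A * Yv \<omega>" using elim A1 by auto
    then show ?case using elim K0 by auto
  qed
  then have argLp: "arg \<in> Lp M p" using Lp_dom[OF meas G p0] by simp
  have cL: "(\<lambda>\<omega>. L) \<in> Lp M p" by (rule Lp_const[OF finite_measure_axioms])
  have c0: "(\<lambda>\<omega>. 0) \<in> Lp M p" by (rule Lp_const[OF finite_measure_axioms])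
  have Rmono: "monotone_rm M (Lp M p) R" and Rt: "translation_invariant (Lp M p) R"
    and Rn: "R (\<lambda>_. 0) = 0" using R by (auto simp: risk_measure_def normalized_def)
  have "R (\<lambda>\<omega>. L) \<le> R arg"
    by (rule Rmono[unfolded monotone_rm_def, rule_format, OF cL argLp]) (use bnds in \<open>auto elim: AE_mp\<close>)
  moreover have "R (\<lambda>\<omega>. L) = ereal L"
    using Rt[unfolded translation_invariant_def, rule_format, OF c0, of L] Rn by simp
  moreover have "R arg \<le> R (\<lambda>\<omega>. A * Yv \<omega> + K)"
    by (rule Rmono[unfolded monotone_rm_def, rule_format, OF argLp U]) (use bnds in \<open>auto elim: AE_mp\<close>)
  moreover have "R (\<lambda>\<omega>. A * Yv \<omega> + K) = R (\<lambda>\<omega>. A * Yv \<omega>) + ereal K"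
    by (rule Rt[unfolded translation_invariant_def, rule_format, OF AY])
  ultimately show ?thesis unfolding L_def K_def A_def by simp
qed


lemma esssup_fin:
  assumes "prob_space M" "Zv \<in> Linf_plus M"
  shows "\<exists>s\<ge>0. esssup M (\<lambda>\<omega>. ereal (Zv \<omega>)) = ereal s"
proof -
  interpret prob_space M by fact
  have Znn: "AE \<omega> in M. 0 \<le> Zv \<omega>" and Zsup: "esssup M (\<lambda>\<omega>. ereal (Zv \<omega>)) < \<infinity>"
    using assms(2) by (auto simp: Linf_plus_def)
  have "esssup M (\<lambda>\<omega>. ereal 0) \<le> esssup M (\<lambda>\<omega>. ereal (Zv \<omega>))"
    by (rule esssup_AE_mono) (use Znn in auto)
  then have "0 \<le> esssup M (\<lambda>\<omega>. ereal (Zv \<omega>))"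
    using esssup_const[of M "ereal 0"] emeasure_space_1 by (simp add: zero_ereal_def)
  with Zsup show ?thesis
    by (cases "esssup M (\<lambda>\<omega>. ereal (Zv \<omega>))") auto
qed

lemma ak_ge1: "0 \<le> \<beta> \<Longrightarrow> 1 \<le> ak \<beta> k"
  by (induction k) auto

lemma clk_fin:
  assumes "prob_space M" "\<forall>n\<ge>1. Z n \<in> Linf_plus M" "0 \<le> \<beta>"
  shows "\<exists>r\<ge>0. clk M \<beta> Z k n = ereal r"
proof (induction k arbitrary: n)
  case 0
  then show ?case using esssup_fin[OF assms(1), of "Z (Suc n)"] assms(2) by simp
next
  case (Suc k)
  obtain s where s: "0 \<le> s" "esssup M (\<lambda>\<omega>. ereal (Z (Suc n) \<omega>)) = ereal s"
    using esssup_fin[OF assms(1), of "Z (Suc n)"] assms(2) by auto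
  obtain r where r: "0 \<le> r" "clk M \<beta> Z k (Suc n) = ereal r" using Suc by blast
  have "1 \<le> ak \<beta> k" using ak_ge1 assms(3) .
  then show ?case using s r assms(3)
    by (intro exI[of _ "(1 + \<beta> * ak \<beta> k) * s + \<beta> * r"]) auto
qed

lemma rho_fin:
  assumes "prob_space M" "Yv \<in> Lp_plus M p" "risk_measure M p R" "R (\<lambda>\<omega>. c * Yv \<omega>) < \<infinity>" "0 \<le> c"
  shows "\<exists>r\<ge>0. R (\<lambda>\<omega>. c * Yv \<omega>) = ereal r"
proof -
  interpret prob_space M by fact
  have YLp: "Yv \<in> Lp M p" and Ynn: "AE \<omega> in M. 0 \<le> Yv \<omega>" using assms(2) by (auto simp: Lp_plus_def)
  have Rmono: "monotone_rm M (Lp M p) R" and Rn: "R (\<lambda>_. 0) = 0"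
    using assms(3) by (auto simp: risk_measure_def normalized_def)
  have c0: "(\<lambda>\<omega>. 0) \<in> Lp M p" by (rule Lp_const[OF finite_measure_axioms])
  have "R (\<lambda>\<omega>. 0) \<le> R (\<lambda>\<omega>. c * Yv \<omega>)"
    by (rule Rmono[unfolded monotone_rm_def, rule_format, OF c0 Lp_cmult[OF YLp]])
       (use Ynn assms(5) in auto)
  with Rn assms(4) show ?thesis by (cases "R (\<lambda>\<omega>. c * Yv \<omega>)") auto
qed

lemma pi_fin:
  assumes "prob_space M" "Yv \<in> Lp_plus M p" "premium_principle M p P" "P Yv < \<infinity>"
  shows "\<exists>r\<ge>0. P Yv = ereal r"
proof -
  interpret prob_space M by fact
  have Ynn: "AE \<omega> in M. 0 \<le> Yv \<omega>" using assms(2) by (auto simp: Lp_plus_def)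
  have Pmono: "monotone_rm M (Lp_plus M p) P" and Pn: "P (\<lambda>_. 0) = 0"
    using assms(3) by (auto simp: premium_principle_def normalized_def)
  have c0: "(\<lambda>\<omega>. 0::real) \<in> Lp_plus M p"
    by (simp add: Lp_plus_def Lp_const finite_measure_axioms)
  have "P (\<lambda>\<omega>. 0) \<le> P Yv"
    by (rule Pmono[unfolded monotone_rm_def, rule_format, OF c0 assms(2)]) (use Ynn in auto)
  with Pn assms(4) show ?thesis by (cases "P Yv") auto
qed

lemma cuk_fin:
  assumes M: "prob_space M" and Y: "\<forall>n\<ge>1. Y n \<in> Lp_plus M p" and b: "0 \<le> \<beta>"
    and P: "\<forall>n<N. premium_principle M p (piR n) \<and> piR n (Y (Suc n)) < \<infinity>"
    and R: "\<forall>n<N. risk_measure M p (rho n) \<and> (\<forall>l\<ge>0. rho n (\<lambda>\<omega>. l * Y (Suc n) \<omega>) < \<infinity>)"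
  shows "n + k < N \<Longrightarrow> \<exists>r\<ge>0. cuk \<beta> rho piR Y k n = ereal r"
proof (induction k arbitrary: n)
  case 0
  then have n: "n < N" by simp
  have Yin: "Y (Suc n) \<in> Lp_plus M p" using Y by simp
  have fin: "rho n (\<lambda>\<omega>. 1 * Y (Suc n) \<omega>) < \<infinity>" using R n zero_le_one by blast
  have rm: "risk_measure M p (rho n)" using R n by blast
  obtain r where r: "0 \<le> r" "rho n (\<lambda>\<omega>. 1 * Y (Suc n) \<omega>) = ereal r"
    using rho_fin[OF M Yin rm fin] by auto
  obtain q where q: "0 \<le> q" "piR n (Y (Suc n)) = ereal q"
    using pi_fin[OF M, of "Y (Suc n)" p "piR n"] Y P n by auto
  show ?case using r q by (intro exI[of _ "r + q"]) auto
next
  case (Suc k)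
  then have n: "n < N" and IH: "\<exists>r\<ge>0. cuk \<beta> rho piR Y k (Suc n) = ereal r" by auto
  have A: "1 \<le> 1 + \<beta> * ak \<beta> k" using ak_ge1[OF b, of k] b by simp
  have Yin: "Y (Suc n) \<in> Lp_plus M p" using Y by simp
  have fin: "rho n (\<lambda>\<omega>. (1 + \<beta> * ak \<beta> k) * Y (Suc n) \<omega>) < \<infinity>" using R n A by auto
  have rm: "risk_measure M p (rho n)" using R n by blast
  obtain r where r: "0 \<le> r" "rho n (\<lambda>\<omega>. (1 + \<beta> * ak \<beta> k) * Y (Suc n) \<omega>) = ereal r"
    using rho_fin[OF M Yin rm fin] A by auto
  obtain q where q: "0 \<le> q" "piR n (Y (Suc n)) = ereal q"
    using pi_fin[OF M, of "Y (Suc n)" p "piR n"] Y P n by auto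
  obtain t where t: "0 \<le> t" "cuk \<beta> rho piR Y k (Suc n) = ereal t" using IH by blast
  show ?case using r q t A b
    by (intro exI[of _ "r + (1 + \<beta> * ak \<beta> k) * q + \<beta> * t"]) auto
qed

lemma hcur_happend: "hcur (happend h f y) = y"
  by (simp add: hcur_def happend_def hx_def)

lemma happend_Hset:
  assumes "h \<in> Hset c piR Y n" "f \<in> Dset c piR Y n (hcur h)"
  shows "happend h f y \<in> Hset c piR Y (Suc n)"
proof -
  have len: "length (snd h) = n" and D: "\<forall>k<n. hf h k \<in> Dset c piR Y k (hx h k)"
    using assms(1) by (auto simp: Hset_def)
  have "hf (happend h f y) k \<in> Dset c piR Y k (hx (happend h f y) k)" if "k < Suc n" for k
  proof (cases "k < n")
    case True
    have "hf (happend h f y) k = hf h k" using True len by (simp add: hf_def happend_def nth_append)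
    moreover have "hx (happend h f y) k = hx h k" using True len
      by (auto simp: hx_def happend_def nth_append)
    ultimately show ?thesis using D True by simp
  next
    case False
    then have k: "k = n" using that by simp
    have "hf (happend h f y) k = f" using k len by (simp add: hf_def happend_def nth_append)
    moreover have "hx (happend h f y) k = hcur h" using k len
      by (cases n) (auto simp: hx_def hcur_def happend_def nth_append)
    ultimately show ?thesis using assms(2) k by simp
  qed
  then show ?thesis using len by (simp add: Hset_def happend_def)
qed


theorem mainTheorem3:
  fixes M :: "'a measure" and p \<beta> :: real and N :: nat and constrained :: bool
    and Y Z :: "nat \<Rightarrow> 'a \<Rightarrow> real"
    and rho piR :: "nat \<Rightarrow> ('a \<Rightarrow> real) \<Rightarrow> ereal"
    and d :: "nat \<Rightarrow> hist \<Rightarrow> real \<Rightarrow> real"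
  assumes "prob_space M"
    and "1 \<le> p"
    and "1 \<le> N"
    and "0 < \<beta>" and "\<beta> \<le> 1"
    and "\<forall>n\<ge>1. Y n \<in> Lp_plus M p"
    and "\<forall>n\<ge>1. Z n \<in> Linf_plus M"
    and "prob_space.indep_vars M (\<lambda>_. borel) (\<lambda>n \<omega>. (Y n \<omega>, Z n \<omega>)) {1..}"
    and "\<forall>n<N. premium_principle M p (piR n) \<and> piR n (Y (Suc n)) < \<infinity>"
    and "\<forall>n<N. risk_measure M p (rho n) \<and> (\<forall>l\<ge>0. rho n (\<lambda>\<omega>. l * Y (Suc n) \<omega>) < \<infinity>)"
    and "is_policy N constrained piR Y d"
    and standing: "\<forall>n<N. \<forall>h\<in>Hset constrained piR Y n.
           pol_arg \<beta> piR Y Z d n (Vpol N \<beta> rho piR Y Z d (Suc n)) h \<in> borel_measurable M"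
  shows "\<forall>n<N. \<forall>h\<in>Hset constrained piR Y n.
           b_low M N \<beta> Z n (hcur h) \<le> Vpol N \<beta> rho piR Y Z d n h
           \<and> Vpol N \<beta> rho piR Y Z d n h \<le> b_up N \<beta> rho piR Y n (hcur h)"
proof -
  note M = assms(1) and p = assms(2) and \<beta> = assms(4) and Yass = assms(6) and Zass = assms(7)
    and Pass = assms(9) and Rass = assms(10) and pol = assms(11)
  define V where "V = Vpol N \<beta> rho piR Y Z d"
  define CL where "CL n = real_of_ereal (c_low M N \<beta> Z n)" for n
  define CU where "CU n = real_of_ereal (c_up N \<beta> rho piR Y n)" for n
  define A where "A n = acoef N \<beta> n" for n
  have b0: "0 \<le> \<beta>" using \<beta> by simp
  have CLe: "c_low M N \<beta> Z n = ereal (CL n) \<and> 0 \<le> CL n" for n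
    using clk_fin[OF M Zass b0, of "N - 1 - n" n] unfolding CL_def c_low_def by auto
  have CUe: "c_up N \<beta> rho piR Y n = ereal (CU n) \<and> 0 \<le> CU n" if "n < N" for n
    using cuk_fin[OF M Yass b0 Pass Rass, of n "N - 1 - n"] that unfolding CU_def c_up_def by auto
  have A1: "1 \<le> A n" for n unfolding A_def acoef_def using ak_ge1[OF b0] .
  have Vsuc: "V n h = rho n (pol_arg \<beta> piR Y Z d n (V (Suc n)) h)" if "n < N" for n h
  proof -
    have e: "N - n = Suc (N - Suc n)" using that by simp
    have "V (Suc n) = Vk \<beta> rho piR Y Z d (N - Suc n) (Suc n)"
      by (rule ext) (simp add: V_def Vpol_def)
    then show ?thesis by (simp add: V_def Vpol_def e)
  qed
  have fD: "d n h \<in> Dset constrained piR Y n (hcur h)" if "n < N" "h \<in> Hset constrained piR Y n" for n h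
    using pol that unfolding is_policy_def by blast
  have fF: "d n h \<in> Fset" if "n < N" "h \<in> Hset constrained piR Y n" for n h
    using fD[OF that] by (cases constrained) (auto simp: Dset_def)
  have argeq: "pol_arg \<beta> piR Y Z d n (V (Suc n)) h = (\<lambda>\<omega>. d n h (Y (Suc n) \<omega>)
      + real_of_ereal (piR n (\<lambda>\<omega>. Y (Suc n) \<omega> - d n h (Y (Suc n) \<omega>))) - Z (Suc n) \<omega> - hcur h
      + \<beta> * real_of_ereal (V (Suc n) (happend h (d n h) (hcur h + Z (Suc n) \<omega> - d n h (Y (Suc n) \<omega>)
          - real_of_ereal (piR n (\<lambda>\<omega>. Y (Suc n) \<omega> - d n h (Y (Suc n) \<omega>)))))))" for n h
    unfolding pol_arg_def piRf_def Let_def by simp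
  have key: "\<forall>n. N - 1 - n = k \<longrightarrow> n < N \<longrightarrow> (\<forall>h\<in>Hset constrained piR Y n.
      ereal (- CL n - A n * max (hcur h) 0) \<le> V n h \<and> V n h \<le> ereal (CU n + A n * max (- hcur h) 0))"
    for k
  proof (induction k)
    case 0
    show ?case
    proof (intro allI impI ballI)
      fix n h assume k: "N - 1 - n = 0" and n: "n < N" and h: "h \<in> Hset constrained piR Y n"
      have nN: "N - Suc n = 0" using k n by simp
      have Yv: "Y (Suc n) \<in> Lp_plus M p" using Yass by simp
      have Zv: "Z (Suc n) \<in> Linf_plus M" using Zass by simp
      have R: "risk_measure M p (rho n)" using Rass n by blast
      have P: "premium_principle M p (piR n)" and Pf: "piR n (Y (Suc n)) < \<infinity>" using Pass n by auto
      have Wb: "\<And>y. ereal (- 0 - 0 * max y 0) \<le> V (Suc n) (happend h (d n h) y)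
                 \<and> V (Suc n) (happend h (d n h) y) \<le> ereal (0 + 0 * max (- y) 0)"
        by (simp add: V_def Vpol_def nN)
      have meas: "pol_arg \<beta> piR Y Z d n (V (Suc n)) h \<in> borel_measurable M"
        using standing n h unfolding V_def by blast
      note st = step[OF M p \<beta> Yv Zv R P Pf fF[OF n h] order_refl order_refl order_refl Wb refl argeq meas refl refl]
      have fin1: "rho n (\<lambda>\<omega>. 1 * Y (Suc n) \<omega>) < \<infinity>" using Rass n zero_le_one by blast
      obtain r where r0: "rho n (\<lambda>\<omega>. 1 * Y (Suc n) \<omega>) = ereal r"
        using rho_fin[OF M Yv R fin1 zero_le_one] by auto
      then have r: "rho n (Y (Suc n)) = ereal r" by simp
      obtain q where q: "piR n (Y (Suc n)) = ereal q"
        using pi_fin[OF M Yv P Pf] by auto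
      have CLn: "CL n = real_of_ereal (esssup M (\<lambda>\<omega>. ereal (Z (Suc n) \<omega>)))"
        unfolding CL_def c_low_def using k by simp
      have CUn: "CU n = r + q" unfolding CU_def c_up_def using k r q by simp
      have An: "A n = 1" unfolding A_def acoef_def using k by simp
      show "ereal (- CL n - A n * max (hcur h) 0) \<le> V n h \<and> V n h \<le> ereal (CU n + A n * max (- hcur h) 0)"
        using st unfolding Vsuc[OF n] CLn CUn An by (simp add: r q add.assoc)
    qed
  next
    case (Suc k)
    show ?case
    proof (intro allI impI ballI)
      fix n h assume k: "N - 1 - n = Suc k" and n: "n < N" and h: "h \<in> Hset constrained piR Y n"
      have n1: "Suc n < N" and k1: "N - 1 - Suc n = k" using k by auto
      have Yv: "Y (Suc n) \<in> Lp_plus M p" using Yass by simp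
      have Zv: "Z (Suc n) \<in> Linf_plus M" using Zass by simp
      have R: "risk_measure M p (rho n)" using Rass n by blast
      have P: "premium_principle M p (piR n)" and Pf: "piR n (Y (Suc n)) < \<infinity>" using Pass n by auto
      have IH: "\<forall>h\<in>Hset constrained piR Y (Suc n).
        ereal (- CL (Suc n) - A (Suc n) * max (hcur h) 0) \<le> V (Suc n) h
        \<and> V (Suc n) h \<le> ereal (CU (Suc n) + A (Suc n) * max (- hcur h) 0)"
        using Suc.IH k1 n1 by blast
      have Wb: "\<And>y. ereal (- CL (Suc n) - A (Suc n) * max y 0) \<le> V (Suc n) (happend h (d n h) y)
                 \<and> V (Suc n) (happend h (d n h) y) \<le> ereal (CU (Suc n) + A (Suc n) * max (- y) 0)"
        using IH happend_Hset[OF h fD[OF n h]] hcur_happend by metis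
      have meas: "pol_arg \<beta> piR Y Z d n (V (Suc n)) h \<in> borel_measurable M"
        using standing n h unfolding V_def by blast
      have a0: "0 \<le> A (Suc n)" using A1[of "Suc n"] by simp
      note st = step[OF M p \<beta> Yv Zv R P Pf fF[OF n h] a0 conjunct2[OF CLe] conjunct2[OF CUe[OF n1]] Wb refl argeq meas refl refl]
      have Ap: "0 \<le> 1 + \<beta> * A (Suc n)" using a0 b0 by simp
      have fin1: "rho n (\<lambda>\<omega>. (1 + \<beta> * A (Suc n)) * Y (Suc n) \<omega>) < \<infinity>" using Rass n Ap by blast
      obtain r where r: "rho n (\<lambda>\<omega>. (1 + \<beta> * A (Suc n)) * Y (Suc n) \<omega>) = ereal r"
        using rho_fin[OF M Yv R fin1 Ap] by auto
      obtain q where q: "piR n (Y (Suc n)) = ereal q"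
        using pi_fin[OF M Yv P Pf] by auto
      obtain s where s: "esssup M (\<lambda>\<omega>. ereal (Z (Suc n) \<omega>)) = ereal s"
        using esssup_fin[OF M Zv] by auto
      have Ak: "ak \<beta> k = A (Suc n)" unfolding A_def acoef_def k1 ..
      have CLS: "c_low M N \<beta> Z (Suc n) = clk M \<beta> Z k (Suc n)" unfolding c_low_def k1 ..
      have CUS: "c_up N \<beta> rho piR Y (Suc n) = cuk \<beta> rho piR Y k (Suc n)" unfolding c_up_def k1 ..
      have clS: "clk M \<beta> Z k (Suc n) = ereal (CL (Suc n))" using CLe[of "Suc n"] CLS by simp
      have cuS: "cuk \<beta> rho piR Y k (Suc n) = ereal (CU (Suc n))" using CUe[OF n1] CUS by simp
      have CLn: "CL n = (1 + \<beta> * A (Suc n)) * s + \<beta> * CL (Suc n)"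
        unfolding CL_def[of n] c_low_def k by (simp add: s Ak clS)
      have CUn: "CU n = r + (1 + \<beta> * A (Suc n)) * q + \<beta> * CU (Suc n)"
        unfolding CU_def[of n] c_up_def k by (simp add: r q Ak cuS)
      have An0: "A n = ak \<beta> (Suc k)" unfolding A_def acoef_def k ..
      have An: "A n = 1 + \<beta> * A (Suc n)" using An0 Ak by simp
      show "ereal (- CL n - A n * max (hcur h) 0) \<le> V n h \<and> V n h \<le> ereal (CU n + A n * max (- hcur h) 0)"
        using st unfolding Vsuc[OF n] CLn CUn An r by (simp add: q s algebra_simps)
    qed
  qed
  show ?thesis
  proof (intro allI impI ballI)
    fix n h assume n: "n < N" and h: "h \<in> Hset constrained piR Y n"
    have "ereal (- CL n - A n * max (hcur h) 0) \<le> V n h \<and> V n h \<le> ereal (CU n + A n * max (- hcur h) 0)"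
      using key[of "N - 1 - n"] n h by blast
    moreover have "b_low M N \<beta> Z n (hcur h) = ereal (- CL n - A n * max (hcur h) 0)"
      unfolding b_low_def using CLe[of n] by (simp add: A_def)
    moreover have "b_up N \<beta> rho piR Y n (hcur h) = ereal (CU n + A n * max (- hcur h) 0)"
      unfolding b_up_def using CUe[OF n] by (simp add: A_def)
    ultimately show "b_low M N \<beta> Z n (hcur h) \<le> Vpol N \<beta> rho piR Y Z d n h
           \<and> Vpol N \<beta> rho piR Y Z d n h \<le> b_up N \<beta> rho piR Y n (hcur h)"
      unfolding V_def by simp
  qed
qed

end
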